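(* Let $k\ge 2$ and $m\ge 1$ be integers, let $x=\zeta_k=e^{2\pi\sqrt{-1}/k}$, and let $H\in \mathrm{BH}(mk,k)$ be such that its first $k$ rows form the $k\times mk$ matrix $F_k\otimes j_m$. Partition these first $k$ rows into the $k$ consecutive $k\times m$ blocks $B_1,\dots,B_k$ (block $B_\ell$ consisting of columns $(\ell-1)m+1,\dots,\ell m$). Then for any choice of elements $c_1,\dots,c_k\in\langle x\rangle$, the matrix $K$ obtained from $H$ by replacing each block $B_\ell$ by $c_\ell B_\ell$ (and leaving all other entries unchanged) is also in $\mathrm{BH}(mk,k)$.
   Context: For $k\ge 1$, $\zeta_k=e^{2\pi\sqrt{-1}/k}$ and $\langle \zeta_k\rangle$ is the set of all $k$-th roots of unity. A complex Hadamard matrix of order $n$ is an $n\times n$ matrix $H$ with all entries of modulus $1$ and $HH^{\ast}=nI_n$. $\mathrm{BH}(n,k)$ denotes the set of $n\times n$ complex Hadamard matrices all of whose entries lie in $\langle\zeta_k\rangle$ (Butson Hadamard matrices). $F_k=[\zeta_k^{(i-1)(j-1)}]_{1\le i,j\le k}$ is the $k\times k$ Fourier matrix, $j_m$ denotes the all-ones row vector of length $m$, and $\otimes$ is the Kronecker product, $A\otimes B=[a_{ij}B]$. *)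

theory Defs
  imports Complex_Main
begin

(* Matrices are rendered as functions nat => nat => complex, indexed from 0;
   an n x n matrix is such a function restricted to indices < n. *)

definition zeta :: "nat \<Rightarrow> complex" where
  "zeta k = cis (2 * pi / real k)"

definition roots_unity :: "nat \<Rightarrow> complex set" where
  "roots_unity k = {zeta k ^ e | e. e < k}"

definition complex_hadamard :: "nat \<Rightarrow> (nat \<Rightarrow> nat \<Rightarrow> complex) \<Rightarrow> bool" where
  "complex_hadamard n H \<longleftrightarrow>
     (\<forall>i<n. \<forall>j<n. norm (H i j) = 1) \<and>
     (\<forall>i<n. \<forall>i'<n. (\<Sum>j<n. H i j * cnj (H i' j)) = (if i = i' then of_nat n else 0))"

definition BH :: "nat \<Rightarrow> nat \<Rightarrow> (nat \<Rightarrow> nat \<Rightarrow> complex) \<Rightarrow> bool" where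
  "BH n k H \<longleftrightarrow> complex_hadamard n H \<and> (\<forall>i<n. \<forall>j<n. H i j \<in> roots_unity k)"

definition fourier :: "nat \<Rightarrow> nat \<Rightarrow> nat \<Rightarrow> complex" where
  "fourier k i j = zeta k ^ (i * j)"

(* Kronecker product F_k \<otimes> j_m, a k x (m k) matrix: entry (i,j) = F_k(i, j div m) *)
definition fourier_kron_ones :: "nat \<Rightarrow> nat \<Rightarrow> nat \<Rightarrow> nat \<Rightarrow> complex" where
  "fourier_kron_ones k m i j = fourier k i (j div m)"

end

theory Submission
  imports Defs
begin

lemma zeta_pow: "zeta k ^ d = cis (2 * pi * real d / real k)"
  unfolding zeta_def DeMoivre by (simp add: field_simps)

lemma zeta_pow_k: "k > 0 \<Longrightarrow> zeta k ^ k = 1"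
  unfolding zeta_pow by simp

lemma zeta_pow_mod: "k > 0 \<Longrightarrow> zeta k ^ d = zeta k ^ (d mod k)"
proof -
  assume k: "k > 0"
  have "zeta k ^ d = zeta k ^ (k * (d div k) + d mod k)" by simp
  also have "\<dots> = zeta k ^ (k * (d div k)) * zeta k ^ (d mod k)"
    by (rule power_add)
  also have "\<dots> = (zeta k ^ k) ^ (d div k) * zeta k ^ (d mod k)"
    by (simp only: power_mult)
  also have "\<dots> = zeta k ^ (d mod k)" using zeta_pow_k[OF k] by simp
  finally show ?thesis .
qed

lemma zeta_pow_eq1: assumes k: "k > 0" and h: "zeta k ^ d = 1" shows "d mod k = 0"
proof -
  have inj: "inj_on (\<lambda>e. cis (2 * pi * real e / real k)) {..<k}"
    using bij_betw_roots_unity[OF k] by (simp add: bij_betw_def)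
  have "zeta k ^ (d mod k) = zeta k ^ 0" using h zeta_pow_mod[OF k, of d] by simp
  hence "cis (2 * pi * real (d mod k) / real k) = cis (2 * pi * real 0 / real k)"
    unfolding zeta_pow .
  thus ?thesis using inj_onD[OF inj, of "d mod k" 0] k by simp
qed

lemma norm_zeta_pow: "norm (zeta k ^ d) = 1"
  unfolding zeta_pow by simp

lemma roots_mult: assumes k: "k > 0" "a \<in> roots_unity k" "b \<in> roots_unity k"
  shows "a * b \<in> roots_unity k"
proof -
  obtain e f where a: "a = zeta k ^ e" and b: "b = zeta k ^ f"
    using assms unfolding roots_unity_def by auto
  have "a * b = zeta k ^ ((e + f) mod k)"
    using a b zeta_pow_mod[OF k(1), of "e+f"] by (simp add: power_add)
  thus ?thesis unfolding roots_unity_def using k(1) by auto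
qed

lemma roots_norm: "a \<in> roots_unity k \<Longrightarrow> norm a = 1"
  unfolding roots_unity_def using norm_zeta_pow by auto

lemma geo_zeta: assumes k: "k > 0" and l: "l < k" and t: "t < k"
  shows "(\<Sum>i<k. zeta k ^ (i * (l + k - t))) = (if l = t then of_nat k else 0)"
proof -
  define w where "w = zeta k ^ (l + k - t)"
  have eq: "\<And>i. zeta k ^ (i * (l + k - t)) = w ^ i"
    unfolding w_def by (simp add: power_mult[symmetric] mult.commute)
  show ?thesis
  proof (cases "l = t")
    case True
    hence "w = 1" unfolding w_def using zeta_pow_k[OF k] by simp
    thus ?thesis using True eq by simp
  next
    case False
    have "(l + k - t) mod k \<noteq> 0"
    proof
      assume "(l + k - t) mod k = 0"
      then obtain q where q: "l + k - t = k * q" by auto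
      have "q = 0 \<or> q = 1 \<or> q \<ge> 2" by arith
      moreover have "q \<ge> 2 \<Longrightarrow> k * q \<ge> k * 2" by simp
      moreover have "q \<noteq> 0" 
      proof
        assume "q = 0"
        hence "l + k - t = 0" using q by simp
        thus False using t by simp
      qed
      moreover have "\<not> q \<ge> 2" using q l t calculation(2) by linarith
      ultimately have "q = 1" by simp
      thus False using q False l t by simp
    qed
    hence w1: "w \<noteq> 1" using zeta_pow_eq1[OF k, of "l + k - t"] unfolding w_def by auto
    have "w ^ k = zeta k ^ (k * (l + k - t))" unfolding w_def
      by (simp only: power_mult[symmetric] mult.commute)
    also have "\<dots> = 1" by (simp only: power_mult zeta_pow_k[OF k] power_one)
    finally have "w ^ k = 1" .
    hence "(\<Sum>i<k. w ^ i) = 0" using geometric_sum[OF w1, of k] by simp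
    thus ?thesis using eq False by simp
  qed
qed

lemma fourier_inv:
  fixes s :: "nat \<Rightarrow> complex"
  assumes k: "k > 0" and h: "\<forall>i<k. (\<Sum>l<k. zeta k ^ (i * l) * s l) = 0" and t: "t < k"
  shows "s t = 0"
proof -
  have "0 = (\<Sum>i<k. zeta k ^ (i * (k - t)) * (\<Sum>l<k. zeta k ^ (i * l) * s l))"
    using h by simp
  also have "\<dots> = (\<Sum>i<k. \<Sum>l<k. zeta k ^ (i * (l + k - t)) * s l)"
  proof (rule sum.cong[OF refl])
    fix i assume "i \<in> {..<k}"
    have eqs: "\<And>l. zeta k ^ (i * (k - t)) * (zeta k ^ (i * l) * s l) = zeta k ^ (i * (l + k - t)) * s l"
    proof -
      fix l
      have "i * (l + k - t) = i * (k - t) + i * l" using t by (simp add: algebra_simps)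
      thus "zeta k ^ (i * (k - t)) * (zeta k ^ (i * l) * s l) = zeta k ^ (i * (l + k - t)) * s l"
        by (simp add: power_add)
    qed
    thus "zeta k ^ (i * (k - t)) * (\<Sum>l<k. zeta k ^ (i * l) * s l) = (\<Sum>l<k. zeta k ^ (i * (l + k - t)) * s l)"
      unfolding sum_distrib_left by (rule sum.cong[OF refl])
  qed
  also have "\<dots> = (\<Sum>l<k. \<Sum>i<k. zeta k ^ (i * (l + k - t)) * s l)"
    by (rule sum.swap)
  also have "\<dots> = (\<Sum>l<k. (if l = t then of_nat k else 0) * s l)"
    by (rule sum.cong[OF refl]) (simp add: sum_distrib_right[symmetric] geo_zeta k t)
  also have "\<dots> = (\<Sum>l<k. if l = t then of_nat k * s l else 0)"
    by (rule sum.cong) auto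
  also have "\<dots> = of_nat k * s t" using t by simp
  finally show ?thesis using k by simp
qed

lemma block_sum:
  fixes f g :: "nat \<Rightarrow> complex"
  assumes m: "m > 0"
  shows "(\<Sum>j<m * k. f (j div m) * g j) = (\<Sum>l<k. f l * (\<Sum>j\<in>{l*m..<l*m+m}. g j))"
proof -
  have "(\<Sum>j<m * k. f (j div m) * g j) = (\<Sum>l<k. \<Sum>j\<in>{l*m..<l*m+m}. f (j div m) * g j)"
    using sum.nat_group[of "\<lambda>j. f (j div m) * g j" m k] by (simp add: mult.commute)
  also have "\<dots> = (\<Sum>l<k. f l * (\<Sum>j\<in>{l*m..<l*m+m}. g j))"
  proof (rule sum.cong[OF refl])
    fix l assume "l \<in> {..<k}"
    have "\<And>j. j \<in> {l*m..<l*m+m} \<Longrightarrow> j div m = l"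
      by (rule div_nat_eqI) (auto simp: mult.commute)
    thus "(\<Sum>j\<in>{l*m..<l*m+m}. f (j div m) * g j) = f l * (\<Sum>j\<in>{l*m..<l*m+m}. g j)"
      by (simp add: sum_distrib_left)
  qed
  finally show ?thesis .
qed

theorem proposition5p1:
  fixes k m :: nat and H :: "nat \<Rightarrow> nat \<Rightarrow> complex" and c :: "nat \<Rightarrow> complex"
  assumes "k \<ge> 2" and "m \<ge> 1"
    and "BH (m * k) k H"
    and "\<forall>i<k. \<forall>j<m * k. H i j = fourier_kron_ones k m i j"
    and "\<forall>l<k. c l \<in> roots_unity k"
  shows "BH (m * k) k (\<lambda>i j. if i < k then c (j div m) * H i j else H i j)"
proof -
  have k: "k > 0" and m: "m > 0" using assms(1,2) by auto
  have Hn: "\<forall>i<m*k. \<forall>j<m*k. norm (H i j) = 1"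
    and Ho: "\<forall>i<m*k. \<forall>i'<m*k. (\<Sum>j<m*k. H i j * cnj (H i' j)) = (if i = i' then of_nat (m*k) else 0)"
    and Hr: "\<forall>i<m*k. \<forall>j<m*k. H i j \<in> roots_unity k"
    using assms(3) unfolding BH_def complex_hadamard_def by auto
  have HF: "\<And>i j. i < k \<Longrightarrow> j < m*k \<Longrightarrow> H i j = zeta k ^ (i * (j div m))"
    using assms(4) unfolding fourier_kron_ones_def fourier_def by simp
  have dv: "\<And>j. j < m*k \<Longrightarrow> j div m < k"
    using m by (simp add: div_less_iff_less_mult mult.commute)
  have cn: "\<And>j. j < m*k \<Longrightarrow> c (j div m) * cnj (c (j div m)) = 1"
  proof -
    fix j assume "j < m*k"
    hence "norm (c (j div m)) = 1" using dv assms(5) roots_norm by blast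
    thus "c (j div m) * cnj (c (j div m)) = 1" using complex_norm_square[of "c (j div m)"] by simp
  qed
  have ik: "k \<le> m * k" using m by simp
  define S where "S i' l = (\<Sum>j\<in>{l*m..<l*m+m}. cnj (H i' j))" for i' l
  have S0: "S i' l = 0" if i': "k \<le> i'" "i' < m*k" and l: "l < k" for i' l
  proof (rule fourier_inv[OF k _ l])
    show "\<forall>i<k. (\<Sum>l<k. zeta k ^ (i * l) * S i' l) = 0"
    proof (intro allI impI)
      fix i assume i: "i < k"
      have "(\<Sum>l<k. zeta k ^ (i * l) * S i' l) = (\<Sum>j<m * k. zeta k ^ (i * (j div m)) * cnj (H i' j))"
        unfolding S_def by (rule block_sum[OF m, symmetric])
      also have "\<dots> = (\<Sum>j<m * k. H i j * cnj (H i' j))"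
        using HF i by simp
      also have "\<dots> = 0" using Ho i i' ik by auto
      finally show "(\<Sum>l<k. zeta k ^ (i * l) * S i' l) = 0" .
    qed
  qed
  have S0': "(\<Sum>j\<in>{l*m..<l*m+m}. H i' j) = 0" if i': "k \<le> i'" "i' < m*k" and l: "l < k" for i' l
  proof -
    have "cnj (\<Sum>j\<in>{l*m..<l*m+m}. H i' j) = 0" using S0[OF i' l] unfolding S_def by (simp only: cnj_sum)
    thus ?thesis by (metis complex_cnj_zero_iff)
  qed
  let ?K = "\<lambda>i j. if i < k then c (j div m) * H i j else H i j"
  have mixed: "(\<Sum>j<m*k. ?K i j * cnj (?K i' j)) = 0"
    if i: "i < k" and i': "k \<le> i'" "i' < m*k" for i i'
  proof -
    have "(\<Sum>j<m*k. ?K i j * cnj (?K i' j)) = (\<Sum>j<m*k. (c (j div m) * zeta k ^ (i * (j div m))) * cnj (H i' j))"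
      using i i' HF by (intro sum.cong) auto
    also have "\<dots> = (\<Sum>l<k. (c l * zeta k ^ (i * l)) * S i' l)"
      unfolding S_def by (rule block_sum[OF m])
    also have "\<dots> = 0" using S0[OF i'] by simp
    finally show ?thesis .
  qed
  have mixed': "(\<Sum>j<m*k. ?K i j * cnj (?K i' j)) = 0"
    if i: "i' < k" and i': "k \<le> i" "i < m*k" for i i'
  proof -
    have "(\<Sum>j<m*k. ?K i j * cnj (?K i' j)) = (\<Sum>j<m*k. cnj (c (j div m) * zeta k ^ (i' * (j div m))) * H i j)"
      using i i' HF by (intro sum.cong) auto
    also have "\<dots> = (\<Sum>l<k. cnj (c l * zeta k ^ (i' * l)) * (\<Sum>j\<in>{l*m..<l*m+m}. H i j))"
      by (rule block_sum[OF m])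
    also have "\<dots> = 0" using S0'[OF i'] by simp
    finally show ?thesis .
  qed
  show ?thesis
    unfolding BH_def complex_hadamard_def
  proof (intro conjI allI impI)
    fix i j assume i: "i < m*k" and j: "j < m*k"
    show "norm (?K i j) = 1"
      using Hn i j dv[OF j] assms(5) roots_norm by (auto simp: norm_mult)
    show "?K i j \<in> roots_unity k"
      using Hr i j dv[OF j] assms(5) roots_mult[OF k] by auto
  next
    fix i i' assume i: "i < m*k" and i': "i' < m*k"
    show "(\<Sum>j<m*k. ?K i j * cnj (?K i' j)) = (if i = i' then of_nat (m*k) else 0)"
    proof (cases "i < k")
      case True
      show ?thesis
      proof (cases "i' < k")
        case True2: True
        have "(\<Sum>j<m*k. ?K i j * cnj (?K i' j)) = (\<Sum>j<m*k. H i j * cnj (H i' j))"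
        proof (rule sum.cong[OF refl])
          fix j assume "j \<in> {..<m*k}"
          hence "c (j div m) * cnj (c (j div m)) = 1" using cn by simp
          thus "?K i j * cnj (?K i' j) = H i j * cnj (H i' j)" using True True2
            by (simp add: algebra_simps)
        qed
        thus ?thesis using Ho i i' by simp
      next
        case False
        thus ?thesis using mixed[OF True _ i'] True by auto
      qed
    next
      case False
      show ?thesis
      proof (cases "i' < k")
        case True
        thus ?thesis using mixed'[OF True _ i] False by auto
      next
        case False2: False
        thus ?thesis using Ho i i' False by simp
      qed
    qed
  qed
qed

end
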